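(* Let $(\Omega,\Pi)$ be a set with a possibility measure, let $d\ge1$, and let $X_n$ ($n\ge1$) and $X$ be fuzzy variables on $\Omega$ with values in $\mathbb R^d$. (a) If $X_n\to X$ in measure, then $X_n\to X$ almost surely; if $X_n\to X$ almost surely, then $X_n\to X$ weakly almost surely; if $X_n\to X$ weakly almost surely, then $X_n\to X$ weakly in measure. (b) Suppose each $X_n$ is a compact fuzzy variable and $X\equiv c$ is constant for some $c\in\mathbb R^d$ (so its membership function is the indicator $\mathbf 1_{\{c\}}$). Then $X_n\to X$ in distribution if and only if $X_n\to X$ in measure.
   Context: A fuzzy set in $\Omega$ is a function $\pi:\Omega\to[0,1]$ with $\pi(\omega_0)=1$ for some $\omega_0$; its $\alpha$-cut ($\alpha\in(0,1]$) is $\{\pi\ge\alpha\}$. The possibility measure defined by $\pi$ is $\Pi(B)=\sup_{\omega\in B}\pi(\omega)$ for all $B\subseteq\Omega$ (with $\sup\emptyset=0$). A fuzzy variable with values in $E$ is any map $X:\Omega\to E$; its membership function is the fuzzy set $A_X(y)=\Pi(X^{-1}(y))=\sup\pi(X^{-1}(y))$. $X$ is a compact fuzzy variable if all $\alpha$-cuts of $A_X$, $\alpha\in(0,1]$, are nonempty and compact. $|\cdot|$ is the Euclidean norm. Types of convergence: - almost sure: $\Pi(\{\omega: X_n(\omega)\not\to X(\omega)\})=0$ (the set includes those $\omega$ where the limit does not exist); - weakly almost sure: $\Pi(\{\omega: \lim_n X_n(\omega)=X(\omega)\})=1$; - in measure: for every $\epsilon>0$, $\lim_n\Pi(|X_n-X|\ge\epsilon)=0$;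 - weakly in measure: for every $\epsilon>0$, $\lim_n\Pi(|X_n-X|\le\epsilon)=1$; - in distribution (for compact fuzzy variables): for every $\alpha\in(0,1]$, the $\alpha$-cuts $A_{X_n}^\alpha$ converge to $A_X^\alpha$ in the Hausdorff metric on nonempty compact subsets of $\mathbb R^d$. *)

theory Defs
  imports "HOL-Analysis.Analysis"
begin

definition fuzzy_set :: "('a \<Rightarrow> real) \<Rightarrow> bool" where
  "fuzzy_set \<pi> \<longleftrightarrow> (\<forall>\<omega>. 0 \<le> \<pi> \<omega> \<and> \<pi> \<omega> \<le> 1) \<and> (\<exists>\<omega>0. \<pi> \<omega>0 = 1)"

definition Poss :: "('a \<Rightarrow> real) \<Rightarrow> 'a set \<Rightarrow> real" where
  "Poss \<pi> B = (if B = {} then 0 else (SUP \<omega>\<in>B. \<pi> \<omega>))"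

definition memb :: "('a \<Rightarrow> real) \<Rightarrow> ('a \<Rightarrow> 'b) \<Rightarrow> 'b \<Rightarrow> real" where
  "memb \<pi> X y = Poss \<pi> (X -` {y})"

definition acut :: "('b \<Rightarrow> real) \<Rightarrow> real \<Rightarrow> 'b set" where
  "acut A \<alpha> = {y. A y \<ge> \<alpha>}"

definition compact_fuzzy_var :: "('a \<Rightarrow> real) \<Rightarrow> ('a \<Rightarrow> 'b::euclidean_space) \<Rightarrow> bool" where
  "compact_fuzzy_var \<pi> X \<longleftrightarrow>
     (\<forall>\<alpha>\<in>{0<..1}. acut (memb \<pi> X) \<alpha> \<noteq> {} \<and> compact (acut (memb \<pi> X) \<alpha>))"

definition hausdist :: "'b::metric_space set \<Rightarrow> 'b set \<Rightarrow> real" where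
  "hausdist S T = max (SUP x\<in>S. infdist x T) (SUP y\<in>T. infdist y S)"

definition conv_as :: "('a \<Rightarrow> real) \<Rightarrow> (nat \<Rightarrow> 'a \<Rightarrow> 'b::euclidean_space) \<Rightarrow> ('a \<Rightarrow> 'b) \<Rightarrow> bool" where
  "conv_as \<pi> Xs X \<longleftrightarrow> Poss \<pi> {\<omega>. \<not> ((\<lambda>n. Xs n \<omega>) \<longlonglongrightarrow> X \<omega>)} = 0"

definition conv_weak_as :: "('a \<Rightarrow> real) \<Rightarrow> (nat \<Rightarrow> 'a \<Rightarrow> 'b::euclidean_space) \<Rightarrow> ('a \<Rightarrow> 'b) \<Rightarrow> bool" where
  "conv_weak_as \<pi> Xs X \<longleftrightarrow> Poss \<pi> {\<omega>. (\<lambda>n. Xs n \<omega>) \<longlonglongrightarrow> X \<omega>} = 1"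

definition conv_measure :: "('a \<Rightarrow> real) \<Rightarrow> (nat \<Rightarrow> 'a \<Rightarrow> 'b::euclidean_space) \<Rightarrow> ('a \<Rightarrow> 'b) \<Rightarrow> bool" where
  "conv_measure \<pi> Xs X \<longleftrightarrow>
     (\<forall>\<epsilon>>0. (\<lambda>n. Poss \<pi> {\<omega>. norm (Xs n \<omega> - X \<omega>) \<ge> \<epsilon>}) \<longlonglongrightarrow> 0)"

definition conv_weak_measure :: "('a \<Rightarrow> real) \<Rightarrow> (nat \<Rightarrow> 'a \<Rightarrow> 'b::euclidean_space) \<Rightarrow> ('a \<Rightarrow> 'b) \<Rightarrow> bool" where
  "conv_weak_measure \<pi> Xs X \<longleftrightarrow>
     (\<forall>\<epsilon>>0. (\<lambda>n. Poss \<pi> {\<omega>. norm (Xs n \<omega> - X \<omega>) \<le> \<epsilon>}) \<longlonglongrightarrow> 1)"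

definition conv_distr :: "('a \<Rightarrow> real) \<Rightarrow> (nat \<Rightarrow> 'a \<Rightarrow> 'b::euclidean_space) \<Rightarrow> ('a \<Rightarrow> 'b) \<Rightarrow> bool" where
  "conv_distr \<pi> Xs X \<longleftrightarrow>
     (\<forall>\<alpha>\<in>{0<..1}. (\<lambda>n. hausdist (acut (memb \<pi> (Xs n)) \<alpha>) (acut (memb \<pi> X) \<alpha>)) \<longlonglongrightarrow> 0)"

end

theory Submission
  imports Defs
begin

context
  fixes \<pi> :: "'a \<Rightarrow> real"
  assumes fz: "fuzzy_set \<pi>"
begin

lemma pi_bounds: "0 \<le> \<pi> w" "\<pi> w \<le> 1"
  using fz unfolding fuzzy_set_def by auto

lemma Poss_le: "w \<in> B \<Longrightarrow> \<pi> w \<le> Poss \<pi> B"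
  unfolding Poss_def using pi_bounds
  by (auto intro!: cSUP_upper bdd_aboveI[where M=1])

lemma Poss_bound: "(\<And>w. w \<in> B \<Longrightarrow> \<pi> w \<le> e) \<Longrightarrow> 0 \<le> e \<Longrightarrow> Poss \<pi> B \<le> e"
  unfolding Poss_def by (auto intro!: cSUP_least)

lemma Poss_nonneg: "0 \<le> Poss \<pi> B"
proof (cases "B = {}")
  case False then obtain w where "w \<in> B" by auto
  then show ?thesis using Poss_le[of w B] pi_bounds[of w] by linarith
qed (simp add: Poss_def)

lemma Poss_le1: "Poss \<pi> B \<le> 1"
  by (rule Poss_bound) (auto simp: pi_bounds)

lemma Poss_mono: "B \<subseteq> C \<Longrightarrow> Poss \<pi> B \<le> Poss \<pi> C"
  by (rule Poss_bound) (auto intro: Poss_le Poss_nonneg)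

lemma Poss_UNIV: "Poss \<pi> UNIV = 1"
proof -
  obtain w where "\<pi> w = 1" using fz unfolding fuzzy_set_def by auto
  then show ?thesis using Poss_le[of w UNIV] Poss_le1[of UNIV] by auto
qed

lemma part1:
  fixes Xs :: "nat \<Rightarrow> 'a \<Rightarrow> 'b::euclidean_space" and X
  assumes "conv_measure \<pi> Xs X" shows "conv_as \<pi> Xs X"
proof -
  have "\<pi> w \<le> 0" if nc: "\<not> ((\<lambda>n. Xs n w) \<longlonglongrightarrow> X w)" for w
  proof (rule ccontr)
    assume "\<not> \<pi> w \<le> 0"
    hence p: "\<pi> w > 0" by simp
    from nc obtain r where r: "r > 0" "\<forall>no. \<exists>n\<ge>no. \<not> dist (Xs n w) (X w) < r"
      unfolding LIMSEQ_def by auto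
    from assms r(1) have "(\<lambda>n. Poss \<pi> {\<omega>. norm (Xs n \<omega> - X \<omega>) \<ge> r}) \<longlonglongrightarrow> 0"
      unfolding conv_measure_def by auto
    then obtain no where no: "\<forall>n\<ge>no. dist (Poss \<pi> {\<omega>. norm (Xs n \<omega> - X \<omega>) \<ge> r}) 0 < \<pi> w"
      using p unfolding LIMSEQ_def by blast
    from r(2) obtain n where n: "n \<ge> no" "norm (Xs n w - X w) \<ge> r"
      by (auto simp: dist_norm not_less)
    have "\<pi> w \<le> Poss \<pi> {\<omega>. norm (Xs n \<omega> - X \<omega>) \<ge> r}" using n by (intro Poss_le) auto
    moreover have "Poss \<pi> {\<omega>. norm (Xs n \<omega> - X \<omega>) \<ge> r} < \<pi> w"
      using no n(1) Poss_nonneg by (auto simp: dist_real_def)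
    ultimately show False by simp
  qed
  then have "Poss \<pi> {\<omega>. \<not> ((\<lambda>n. Xs n \<omega>) \<longlonglongrightarrow> X \<omega>)} \<le> 0"
    by (intro Poss_bound) auto
  then show ?thesis unfolding conv_as_def using Poss_nonneg
    by (meson order_antisym)
qed

lemma part2:
  fixes Xs :: "nat \<Rightarrow> 'a \<Rightarrow> 'b::euclidean_space" and X
  assumes "conv_as \<pi> Xs X" shows "conv_weak_as \<pi> Xs X"
proof -
  obtain w where w: "\<pi> w = 1" using fz unfolding fuzzy_set_def by auto
  have "(\<lambda>n. Xs n w) \<longlonglongrightarrow> X w"
  proof (rule ccontr)
    assume "\<not> ?thesis"
    hence "\<pi> w \<le> Poss \<pi> {\<omega>. \<not> ((\<lambda>n. Xs n \<omega>) \<longlonglongrightarrow> X \<omega>)}" by (intro Poss_le) auto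
    with assms w show False unfolding conv_as_def by simp
  qed
  hence "\<pi> w \<le> Poss \<pi> {\<omega>. (\<lambda>n. Xs n \<omega>) \<longlonglongrightarrow> X \<omega>}" by (intro Poss_le) auto
  then show ?thesis unfolding conv_weak_as_def using w Poss_le1[of "{\<omega>. (\<lambda>n. Xs n \<omega>) \<longlonglongrightarrow> X \<omega>}"]
    by linarith
qed

lemma part3:
  fixes Xs :: "nat \<Rightarrow> 'a \<Rightarrow> 'b::euclidean_space" and X
  assumes "conv_weak_as \<pi> Xs X" shows "conv_weak_measure \<pi> Xs X"
  unfolding conv_weak_measure_def
proof (intro allI impI)
  fix e :: real assume e: "e > 0"
  let ?C = "{\<omega>. (\<lambda>n. Xs n \<omega>) \<longlonglongrightarrow> X \<omega>}"
  have C1: "Poss \<pi> ?C = 1" using assms unfolding conv_weak_as_def .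
  have Cne: "?C \<noteq> {}" using C1 by (auto simp: Poss_def split: if_splits)
  have bdd: "bdd_above (\<pi> ` ?C)" using pi_bounds by (auto intro: bdd_aboveI[where M=1])
  show "(\<lambda>n. Poss \<pi> {\<omega>. norm (Xs n \<omega> - X \<omega>) \<le> e}) \<longlonglongrightarrow> 1"
    unfolding LIMSEQ_def
  proof (intro allI impI)
    fix r :: real assume r: "r > 0"
    have "1 - r < (SUP \<omega>\<in>?C. \<pi> \<omega>)" using C1 Cne r unfolding Poss_def by (simp split: if_splits)
    then obtain w where w: "w \<in> ?C" "1 - r < \<pi> w"
      using less_cSUP_iff[OF Cne bdd] by blast
    then obtain N where N: "\<forall>n\<ge>N. dist (Xs n w) (X w) < e"
      using e unfolding LIMSEQ_def by auto
    show "\<exists>no. \<forall>n\<ge>no. dist (Poss \<pi> {\<omega>. norm (Xs n \<omega> - X \<omega>) \<le> e}) 1 < r"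
    proof (intro exI allI impI)
      fix n assume "n \<ge> N"
      hence "w \<in> {\<omega>. norm (Xs n \<omega> - X \<omega>) \<le> e}" using N by (auto simp: dist_norm less_imp_le)
      hence "\<pi> w \<le> Poss \<pi> {\<omega>. norm (Xs n \<omega> - X \<omega>) \<le> e}" by (rule Poss_le)
      then show "dist (Poss \<pi> {\<omega>. norm (Xs n \<omega> - X \<omega>) \<le> e}) 1 < r"
        using w(2) Poss_le1[of "{\<omega>. norm (Xs n \<omega> - X \<omega>) \<le> e}"] by (auto simp: dist_real_def)
    qed
  qed
qed

lemma memb_const: "memb \<pi> (\<lambda>_. c) y = (if y = c then 1 else 0)"
  by (auto simp: memb_def Poss_UNIV) (simp add: Poss_def)

lemma acut_const: "\<alpha> \<in> {0<..1} \<Longrightarrow> acut (memb \<pi> (\<lambda>_. c)) \<alpha> = {c}"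
  by (auto simp: acut_def memb_const)

end

lemma haus_upper:
  fixes A :: "'b::euclidean_space set"
  assumes "compact A" "x \<in> A" shows "dist x c \<le> hausdist A {c}"
proof -
  have "bounded A" using assms(1) by (rule compact_imp_bounded)
  then obtain M where "\<forall>y\<in>A. dist c y \<le> M" using bounded_any_center by metis
  hence "\<forall>y\<in>A. dist y c \<le> M" by (simp add: dist_commute)
  hence bdd: "bdd_above ((\<lambda>y. infdist y {c}) ` A)" by (auto intro!: bdd_aboveI2)
  have "dist x c = infdist x {c}" by simp
  also have "\<dots> \<le> (SUP y\<in>A. infdist y {c})" using bdd assms(2) by (rule cSUP_upper2) simp
  also have "\<dots> \<le> hausdist A {c}" unfolding hausdist_def by simp
  finally show ?thesis .
qed

lemma haus_bound:
  fixes A :: "'b::euclidean_space set"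
  assumes "A \<noteq> {}" "\<And>x. x \<in> A \<Longrightarrow> dist x c \<le> e" shows "hausdist A {c} \<le> e"
proof -
  obtain a where a: "a \<in> A" using assms(1) by auto
  have 1: "(SUP y\<in>A. infdist y {c}) \<le> e" using assms by (intro cSUP_least) auto
  have "infdist c A \<le> dist c a" using a by (rule infdist_le)
  hence 2: "(SUP y\<in>{c}. infdist y A) \<le> e" using assms(2)[OF a] by (simp add: dist_commute)
  show ?thesis unfolding hausdist_def using 1 2 by simp
qed

lemma haus_nonneg:
  fixes A :: "'b::euclidean_space set"
  assumes "A \<noteq> {}" shows "0 \<le> hausdist A {c}"
  using assms haus_upper[of A _ c]
proof -
  have "0 \<le> infdist c A" by (rule infdist_nonneg)
  thus ?thesis unfolding hausdist_def by simp
qed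

theorem mainTheorem2:
  fixes \<pi> :: "'a \<Rightarrow> real"
    and Xs :: "nat \<Rightarrow> 'a \<Rightarrow> 'b::euclidean_space"
    and X :: "'a \<Rightarrow> 'b"
  assumes "fuzzy_set \<pi>"
  shows "(conv_measure \<pi> Xs X \<longrightarrow> conv_as \<pi> Xs X)
       \<and> (conv_as \<pi> Xs X \<longrightarrow> conv_weak_as \<pi> Xs X)
       \<and> (conv_weak_as \<pi> Xs X \<longrightarrow> conv_weak_measure \<pi> Xs X)
       \<and> (\<forall>c. (\<forall>n. compact_fuzzy_var \<pi> (Xs n)) \<and> X = (\<lambda>_. c)
              \<longrightarrow> (conv_distr \<pi> Xs X \<longleftrightarrow> conv_measure \<pi> Xs X))"
proof (intro conjI allI impI)
  show "conv_measure \<pi> Xs X \<Longrightarrow> conv_as \<pi> Xs X" using part1[OF assms] .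
  show "conv_as \<pi> Xs X \<Longrightarrow> conv_weak_as \<pi> Xs X" using part2[OF assms] .
  show "conv_weak_as \<pi> Xs X \<Longrightarrow> conv_weak_measure \<pi> Xs X" using part3[OF assms] .
  fix c assume H: "(\<forall>n. compact_fuzzy_var \<pi> (Xs n)) \<and> X = (\<lambda>_. c)"
  hence XX: "X = (\<lambda>_. c)" and cf: "\<And>n \<alpha>. \<alpha> \<in> {0<..1} \<Longrightarrow>
      acut (memb \<pi> (Xs n)) \<alpha> \<noteq> {} \<and> compact (acut (memb \<pi> (Xs n)) \<alpha>)"
    by (auto simp: compact_fuzzy_var_def)
  have ac: "\<And>\<alpha>. \<alpha> \<in> {0<..1} \<Longrightarrow> acut (memb \<pi> X) \<alpha> = {c}"
    using acut_const[OF assms] XX by simp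
  show "conv_distr \<pi> Xs X \<longleftrightarrow> conv_measure \<pi> Xs X"
  proof
    assume D: "conv_distr \<pi> Xs X"
    show "conv_measure \<pi> Xs X" unfolding conv_measure_def
    proof (intro allI impI)
      fix e :: real assume e: "e > 0"
      show "(\<lambda>n. Poss \<pi> {\<omega>. norm (Xs n \<omega> - X \<omega>) \<ge> e}) \<longlonglongrightarrow> 0"
        unfolding LIMSEQ_def
      proof (intro allI impI)
        fix r :: real assume r: "r > 0"
        define \<alpha> where "\<alpha> = min (r/2) 1"
        have a: "\<alpha> \<in> {0<..1}" "\<alpha> < r" using r by (auto simp: \<alpha>_def)
        have "(\<lambda>n. hausdist (acut (memb \<pi> (Xs n)) \<alpha>) {c}) \<longlonglongrightarrow> 0"
          using D a(1) ac[OF a(1)] unfolding conv_distr_def by metis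
        then obtain N where N: "\<forall>n\<ge>N. dist (hausdist (acut (memb \<pi> (Xs n)) \<alpha>) {c}) 0 < e"
          using e unfolding LIMSEQ_def by blast
        show "\<exists>no. \<forall>n\<ge>no. dist (Poss \<pi> {\<omega>. norm (Xs n \<omega> - X \<omega>) \<ge> e}) 0 < r"
        proof (intro exI allI impI)
          fix n assume n: "n \<ge> N"
          have "\<pi> w \<le> \<alpha>" if w: "norm (Xs n w - X w) \<ge> e" for w
          proof (rule ccontr)
            assume "\<not> \<pi> w \<le> \<alpha>"
            moreover have "\<pi> w \<le> memb \<pi> (Xs n) (Xs n w)" unfolding memb_def
              by (rule Poss_le[OF assms]) simp
            ultimately have "Xs n w \<in> acut (memb \<pi> (Xs n)) \<alpha>" by (simp add: acut_def)
            hence "dist (Xs n w) c \<le> hausdist (acut (memb \<pi> (Xs n)) \<alpha>) {c}"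
              using cf[OF a(1)] haus_upper by blast
            moreover have "hausdist (acut (memb \<pi> (Xs n)) \<alpha>) {c} < e"
              using N n cf[OF a(1), of n] haus_nonneg by (auto simp: dist_real_def)
            ultimately show False using w XX by (simp add: dist_norm)
          qed
          hence "Poss \<pi> {\<omega>. norm (Xs n \<omega> - X \<omega>) \<ge> e} \<le> \<alpha>"
            using a(1) by (intro Poss_bound[OF assms]) auto
          then show "dist (Poss \<pi> {\<omega>. norm (Xs n \<omega> - X \<omega>) \<ge> e}) 0 < r"
            using a(2) Poss_nonneg[OF assms] by (simp add: dist_real_def)
        qed
      qed
    qed
  next
    assume M: "conv_measure \<pi> Xs X"
    show "conv_distr \<pi> Xs X" unfolding conv_distr_def
    proof (intro ballI)
      fix \<alpha> :: real assume a: "\<alpha> \<in> {0<..1}"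
      show "(\<lambda>n. hausdist (acut (memb \<pi> (Xs n)) \<alpha>) (acut (memb \<pi> X) \<alpha>)) \<longlonglongrightarrow> 0"
        unfolding ac[OF a] LIMSEQ_def
      proof (intro allI impI)
        fix r :: real assume r: "r > 0"
        have "(\<lambda>n. Poss \<pi> {\<omega>. norm (Xs n \<omega> - X \<omega>) \<ge> r/2}) \<longlonglongrightarrow> 0"
          using M r unfolding conv_measure_def by (metis half_gt_zero)
        then obtain N where N: "\<forall>n\<ge>N. dist (Poss \<pi> {\<omega>. norm (Xs n \<omega> - X \<omega>) \<ge> r/2}) 0 < \<alpha>"
          using a unfolding LIMSEQ_def by auto
        show "\<exists>no. \<forall>n\<ge>no. dist (hausdist (acut (memb \<pi> (Xs n)) \<alpha>) {c}) 0 < r"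
        proof (intro exI allI impI)
          fix n assume n: "n \<ge> N"
          have "dist y c \<le> r/2" if y: "y \<in> acut (memb \<pi> (Xs n)) \<alpha>" for y
          proof (rule ccontr)
            assume "\<not> dist y c \<le> r/2"
            hence "Xs n -` {y} \<subseteq> {\<omega>. norm (Xs n \<omega> - X \<omega>) \<ge> r/2}"
              using XX by (auto simp: dist_norm)
            hence "memb \<pi> (Xs n) y \<le> Poss \<pi> {\<omega>. norm (Xs n \<omega> - X \<omega>) \<ge> r/2}"
              unfolding memb_def by (rule Poss_mono[OF assms])
            moreover have "\<alpha> \<le> memb \<pi> (Xs n) y" using y by (simp add: acut_def)
            moreover have "Poss \<pi> {\<omega>. norm (Xs n \<omega> - X \<omega>) \<ge> r/2} < \<alpha>"
              using N n Poss_nonneg[OF assms] by (auto simp: dist_real_def)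
            ultimately show False by simp
          qed
          hence "hausdist (acut (memb \<pi> (Xs n)) \<alpha>) {c} \<le> r/2"
            using cf[OF a] by (intro haus_bound) auto
          then show "dist (hausdist (acut (memb \<pi> (Xs n)) \<alpha>) {c}) 0 < r"
            using r haus_nonneg[of "acut (memb \<pi> (Xs n)) \<alpha>" c] cf[OF a, of n]
            by (simp add: dist_real_def)
        qed
      qed
    qed
  qed
qed

end
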